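(* Let $q>2$ be a power of $2$ and let $U$ be an intersecting family of polynomials over $\mathbb{F}_q$ of degree at most $2$, with $f$, $B_t$, $\mathrm{Dom}$ as in the context. Let $A,B\colon\mathrm{Dom}\to\mathbb{F}_q$ be functions such that $f(b,b+t)=A(t)b+B(t)$ for every $t\in\mathrm{Dom}$ and $b\in B_t$, and $\mathrm{Tr}_{q/2}(A(t))=0$ for every $t\in\mathrm{Dom}$. Then there exist $\alpha,\beta\in\mathbb{F}_q$ such that $A(t)=\alpha^{q/2}+\alpha$ and $B(t)=\alpha t+\beta$ for each $t\in\mathrm{Dom}$.
   Context: $q=2^n$ and $\mathrm{Tr}_{q/2}(x)=x+x^2+\cdots+x^{2^{n-1}}$. A set of polynomials over $\mathbb{F}_q$ is intersecting if the graphs $\{(x,g(x)):x\in\mathbb{F}_q\}$ of any two members share a point. For such $U$ of degree at most $2$, let $D=\{(b,c)\in\mathbb{F}_q^2 : a+bx+cx^2\in U\text{ for some } a\}$; for $(b,c)\in D$ this $a$ is unique and $f(b,c):=a$. For $t\in\mathbb{F}_q$ let $B_t=\{b\in\mathbb{F}_q : (b,b+t)\in D\}$ and $\mathrm{Dom}=\{t\in\mathbb{F}_q : |B_t|\ge q-\sqrt{q}/2\}$. *)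

theory Defs
  imports "HOL-Computational_Algebra.Polynomial" Complex_Main
begin

text \<open>Absolute trace Tr_{q/2}(x) = x + x^2 + ... + x^(2^(n-1)), q = 2^n.\<close>
definition tr2 :: "nat \<Rightarrow> 'a::field \<Rightarrow> 'a" where
  "tr2 n x = (\<Sum>i<n. x ^ (2 ^ i))"

definition intersecting :: "'a::comm_ring_1 poly set \<Rightarrow> bool" where
  "intersecting U \<longleftrightarrow> (\<forall>g\<in>U. \<forall>h\<in>U. \<exists>x. poly g x = poly h x)"

definition Dset :: "'a::comm_ring_1 poly set \<Rightarrow> ('a \<times> 'a) set" where
  "Dset U = {(b, c). \<exists>a. [:a, b, c:] \<in> U}"

definition fU :: "'a::comm_ring_1 poly set \<Rightarrow> 'a \<Rightarrow> 'a \<Rightarrow> 'a" where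
  "fU U b c = (THE a. [:a, b, c:] \<in> U)"

definition Bset :: "'a::comm_ring_1 poly set \<Rightarrow> 'a \<Rightarrow> 'a set" where
  "Bset U t = {b. (b, b + t) \<in> Dset U}"

definition DomU :: "'a::{comm_ring_1,finite} poly set \<Rightarrow> 'a set" where
  "DomU U = {t. real (card (Bset U t)) \<ge> real (card (UNIV :: 'a set)) - sqrt (real (card (UNIV :: 'a set))) / 2}"

end

theory Submission
  imports Defs
begin

lemma pow_card_same:
  fixes x :: "'a :: {field,finite}"
  shows "x ^ card (UNIV :: 'a set) = x"
proof (cases "x = 0")
  case False
  have "x * (\<Prod>y\<in>UNIV-{0}. x * y) = x * x ^ (card (UNIV :: 'a set) - 1) * \<Prod>(UNIV-{0})"
    by (simp add: prod.distrib mult_ac)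
  also have "x * x ^ (card (UNIV :: 'a set) - 1) = x ^ Suc (card (UNIV :: 'a set) - 1)"
    by (subst power_Suc) auto
  also have "Suc (card (UNIV :: 'a set) - 1) = card (UNIV :: 'a set)"
    using finite_UNIV_card_ge_0[where ?'a = 'a] by simp
  also have "(\<Prod>y\<in>UNIV-{0}. x * y) = (\<Prod>y\<in>UNIV-{0}. y)"
    by (rule prod.reindex_bij_witness[of _ "\<lambda>y. y / x" "\<lambda>y. x * y"]) (use False in auto)
  finally show ?thesis
    by simp
qed (use finite_UNIV_card_ge_0[where ?'a = 'a] in auto)

lemma of_nat_card_zero: "of_nat (card (UNIV :: 'a::{field,finite} set)) = (0::'a)"
proof -
  have "(\<Sum>x\<in>(UNIV::'a set). x + 1) = (\<Sum>x\<in>UNIV. x)"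
    by (rule sum.reindex_bij_witness[of _ "\<lambda>y. y - 1" "\<lambda>y. y + 1"]) auto
  then show ?thesis by (simp add: sum.distrib)
qed

lemma char2:
  assumes "card (UNIV :: 'a::{field,finite} set) = 2 ^ n"
  shows "(2::'a) = 0"
proof -
  have "(of_nat (2^n) :: 'a) = 0" using of_nat_card_zero[where 'a='a] assms by simp
  then have "(2::'a)^n = 0" by simp
  then show ?thesis by simp
qed

lemma sum_univ_zero:
  assumes "card (UNIV :: 'a::{field,finite} set) > 2"
  shows "(\<Sum>x\<in>(UNIV::'a set). x) = 0"
proof -
  have "\<not> UNIV \<subseteq> {0::'a, 1}"
  proof
    assume "UNIV \<subseteq> {0::'a,1}"
    then have "card (UNIV::'a set) \<le> card {0::'a,1}" by (intro card_mono) auto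
    also have "\<dots> \<le> 2" by (rule card_insert_le_m1) auto
    finally show False using assms by simp
  qed
  then obtain a :: 'a where a: "a \<noteq> 0" "a \<noteq> 1" by auto
  have "(\<Sum>x\<in>(UNIV::'a set). a * x) = (\<Sum>x\<in>UNIV. x)"
    by (rule sum.reindex_bij_witness[of _ "\<lambda>y. y / a" "\<lambda>y. a * y"]) (use a in auto)
  then have "a * (\<Sum>x\<in>(UNIV::'a set). x) = 1 * (\<Sum>x\<in>UNIV. x)" by (simp add: sum_distrib_left)
  then show ?thesis using a by (metis mult_cancel_right)
qed


lemma c2_neg: "(2::'a::field) = 0 \<Longrightarrow> - x = (x::'a)"
  by (metis add_eq_0_iff mult_2 mult_zero_left)

lemma c2_add_self: "(2::'a::field) = 0 \<Longrightarrow> x + x = (0::'a)"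
  by (metis mult_2 mult_zero_left)

lemma c2_sq_add: "(2::'a::field) = 0 \<Longrightarrow> (x + y)^2 = x^2 + (y::'a)^2"
proof -
  assume h: "(2::'a) = 0"
  have "(x + y)^2 = x^2 + y^2 + 2 * x * y" by (simp add: power2_eq_square algebra_simps)
  then show ?thesis using h by simp
qed

lemma c2_pow_add: "(2::'a::field) = 0 \<Longrightarrow> (x + y)^(2^i) = x^(2^i) + (y::'a)^(2^i)"
proof (induction i)
  case 0 then show ?case by simp
next
  case (Suc i)
  have "(x + y)^(2^Suc i) = ((x+y)^(2^i))^2" by (simp add: power_mult[symmetric] mult.commute)
  also have "\<dots> = (x^(2^i) + y^(2^i))^2" using Suc by simp
  also have "\<dots> = (x^(2^i))^2 + (y^(2^i))^2" using c2_sq_add[OF Suc.prems] by simp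
  also have "\<dots> = x^(2^Suc i) + y^(2^Suc i)" by (simp add: power_mult[symmetric] mult.commute)
  finally show ?case .
qed

lemma tr_add: "(2::'a::field) = 0 \<Longrightarrow> tr2 n (x + y) = tr2 n x + tr2 n (y::'a)"
  unfolding tr2_def by (simp add: c2_pow_add sum.distrib)

lemma tr_sq:
  assumes "(x::'a::field) ^ (2^n) = x"
  shows "tr2 n (x^2) = tr2 n x"
proof -
  have "tr2 n (x^2) = (\<Sum>i<n. x ^ (2 ^ Suc i))"
    unfolding tr2_def by (intro sum.cong) (auto simp: power_mult[symmetric] mult.commute)
  also have "\<dots> + x ^ (2^0) = (\<Sum>i<Suc n. x ^ (2 ^ i))"
    by (subst sum.lessThan_Suc_shift) simp
  also have "\<dots> = tr2 n x + x ^ (2^n)" unfolding tr2_def by simp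
  finally show ?thesis using assms by simp
qed

lemma tr_zero_card:
  assumes "n \<ge> 1"
  shows "card {x::'a::field. tr2 n x = 0} \<le> 2 ^ (n - 1)"
proof -
  define P :: "'a poly" where "P = (\<Sum>i<n. monom 1 (2^i))"
  have ev: "poly P x = tr2 n x" for x
    unfolding P_def tr2_def by (simp add: poly_sum poly_monom)
  have "degree P \<le> 2 ^ (n - 1)"
    unfolding P_def
  proof (rule degree_sum_le)
    fix i assume "i \<in> {..<n}"
    then have "(2::nat)^i \<le> 2^(n-1)" by (intro power_increasing) auto
    then show "degree (monom (1::'a) (2 ^ i)) \<le> 2 ^ (n - 1)" by (simp add: degree_monom_eq)
  qed simp
  moreover have "coeff P (2^(n-1)) = 1"
  proof -
    have "coeff P (2^(n-1)) = (\<Sum>i<n. if 2^i = (2::nat)^(n-1) then 1 else 0)"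
      unfolding P_def by (simp add: coeff_sum coeff_monom)
    also have "\<dots> = (\<Sum>i<n. if i = n - 1 then 1 else 0)"
      by (intro sum.cong) auto
    also have "\<dots> = 1" using assms by simp
    finally show ?thesis .
  qed
  then have "P \<noteq> 0" by auto
  ultimately show ?thesis using card_poly_roots_bound[of P] ev by simp
qed

lemma c2_sq_inj: "(2::'a::field) = 0 \<Longrightarrow> a^2 = (b::'a)^2 \<Longrightarrow> a = b"
proof -
  assume h: "(2::'a) = 0" and e: "a^2 = b^2"
  have "(a + b)^2 = a^2 + b^2" using c2_sq_add[OF h] by simp
  also have "\<dots> = 0" using e c2_add_self[OF h] by simp
  finally have "a + b = 0" by simp
  then have "a = - b" by (simp add: eq_neg_iff_add_eq_0)
  then show "a = b" using c2_neg[OF h, of b] by simp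
qed

lemma keyQ:
  fixes K d w x :: "'a::field"
  assumes c2: "(2::'a) = 0" and frob: "\<And>y::'a. y^(2^n) = y"
    and d: "d \<noteq> 0" and w: "w \<noteq> 0" and eq: "K + d*x + w*x^2 = 0"
  shows "tr2 n (K*w/d^2) = 0"
proof -
  define y where "y = w*x/d"
  have "y + y^2 = (w/d^2) * (d*x + w*x^2)"
    unfolding y_def using d by (simp add: field_simps power2_eq_square)
  also have "d*x + w*x^2 = - K" using eq by (simp add: eq_neg_iff_add_eq_0 algebra_simps)
  also have "- K = K" by (rule c2_neg[OF c2])
  finally have yy: "y + y^2 = K*w/d^2" by simp
  have "tr2 n (y + y^2) = tr2 n y + tr2 n y"
    using tr_add[OF c2] tr_sq[OF frob] by simp
  also have "\<dots> = 0" by (rule c2_add_self[OF c2])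
  finally show ?thesis using yy by simp
qed


lemma surjQ:
  fixes a :: "'a::{field,finite}"
  assumes q: "card (UNIV :: 'a set) = 2^n" and n: "n \<ge> 1"
    and c2: "(2::'a) = 0" and frob: "\<And>y::'a. y^(2^n) = y"
    and tra: "tr2 n a = 0"
  shows "\<exists>g. a = g^2 + g"
proof -
  define I where "I = (\<lambda>g::'a. g^2 + g) ` UNIV"
  have sub: "I \<subseteq> {y. tr2 n y = 0}"
  proof
    fix y assume "y \<in> I"
    then obtain g where g: "y = g^2 + g" unfolding I_def by auto
    have "tr2 n (g^2 + g) = tr2 n g + tr2 n g" using tr_add[OF c2] tr_sq[OF frob] by simp
    then show "y \<in> {y. tr2 n y = 0}" using g c2_add_self[OF c2] by simp
  qed
  have fib: "{h. h^2 + h = g^2 + g} \<subseteq> {g, g + 1}" for g :: 'a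
  proof
    fix h assume "h \<in> {h. h^2 + h = g^2 + g}"
    then have e: "h^2 + h = g^2 + g" by simp
    have "(h + g)^2 + (h + g) = (h^2 + h) + (g^2 + g)"
      using c2_sq_add[OF c2, of h g] by (simp add: algebra_simps)
    also have "\<dots> = (g^2 + g) + (g^2 + g)" using e by simp
    also have "\<dots> = 0" by (rule c2_add_self[OF c2])
    finally have "(h + g) * (h + g + 1) = 0" by (simp add: algebra_simps power2_eq_square)
    then have "h + g = 0 \<or> h + g + 1 = 0" by simp
    then have "h = - g \<or> h = - g - 1" 
    proof
      assume "h + g = 0" then show ?thesis by (simp add: eq_neg_iff_add_eq_0)
    next
      assume a: "h + g + 1 = 0"
      have "h = (h + g + 1) - g - 1" by simp
      then show ?thesis using a by simp
    qed
    then show "h \<in> {g, g+1}" using c2_neg[OF c2, of g] c2_neg[OF c2, of 1] by auto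
  qed
  have "UNIV = (\<Union>y\<in>I. {h. h^2 + h = y})" unfolding I_def by auto
  then have "card (UNIV::'a set) \<le> (\<Sum>y\<in>I. card {h. h^2 + h = y})"
    by (metis card_UN_le finite)
  also have "\<dots> \<le> (\<Sum>y\<in>I. 2)"
  proof (rule sum_mono)
    fix y assume "y \<in> I"
    then obtain g where g: "y = g^2 + g" unfolding I_def by auto
    have "card {h. h^2 + h = y} \<le> card {g, g+1}" using fib[of g] g by (intro card_mono) auto
    also have "\<dots> \<le> 2" by (simp add: card_insert_if)
    finally show "card {h. h^2 + h = y} \<le> 2" .
  qed
  finally have c1: "2^n \<le> 2 * card I" using q by simp
  have c2': "card {y::'a. tr2 n y = 0} \<le> 2^(n-1)" by (rule tr_zero_card[OF n])
  have "card I \<le> card {y::'a. tr2 n y = 0}" using sub by (intro card_mono) auto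
  moreover have "(2::nat)^n = 2 * 2^(n-1)" using n by (metis Suc_diff_le diff_Suc_1 power_Suc)
  ultimately have "card I = card {y::'a. tr2 n y = 0}" using c1 c2' by linarith
  then have "I = {y. tr2 n y = 0}" using sub by (intro card_subset_eq) auto
  then have "a \<in> I" using tra by auto
  then show ?thesis unfolding I_def by auto
qed

lemma card3_le: "card {x,y,z} \<le> 3"
proof -
  have "card (set [x,y,z]) \<le> length [x,y,z]" by (rule card_length)
  then show ?thesis by simp
qed
lemma card3_ne4: "A = {x,y,z} \<Longrightarrow> card A \<noteq> 4"
  using card3_le[of x y z] by auto
lemma card4_distinct: "card {a,b,c,d} = 4 \<Longrightarrow> a\<noteq>b \<and> a\<noteq>c \<and> a\<noteq>d \<and> b\<noteq>c \<and> b\<noteq>d \<and> c\<noteq>d"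
proof (intro conjI notI)
  assume c: "card {a,b,c,d} = 4"
  show False if "a = b" using card3_ne4[of "{a,b,c,d}" b c d] c that by blast
  show False if "a = c" using card3_ne4[of "{a,b,c,d}" b c d] c that by blast
  show False if "a = d" using card3_ne4[of "{a,b,c,d}" b c d] c that by blast
  show False if "b = c" using card3_ne4[of "{a,b,c,d}" a c d] c that by blast
  show False if "b = d" using card3_ne4[of "{a,b,c,d}" a c d] c that by blast
  show False if "c = d" using card3_ne4[of "{a,b,c,d}" a b d] c that by blast
qed
lemma sum4: "card {a,b,c,d} = 4 \<Longrightarrow> sum f {a,b,c,d} = f a + f b + f c + (f d::'b::comm_monoid_add)"
proof -
  assume c: "card {a,b,c,d} = 4"
  note dd = card4_distinct[OF c]
  show ?thesis using dd by (simp add: add.assoc)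
qed

lemma cube_c2: "(2::'a::field) = 0 \<Longrightarrow> d1^2*(d1+e) + d1^3 = d1*(d1+e)^2 + (d1+e)^3 \<Longrightarrow> e^3 = (0::'a)"
proof -
  assume h2: "(2::'a) = 0" and h: "d1^2*(d1+e) + d1^3 = d1*(d1+e)^2 + (d1+e)^3"
  have "e^3 = (d1*(d1+e)^2 + (d1+e)^3 - (d1^2*(d1+e) + d1^3)) - 2*(2*d1^2*e + 2*d1*e^2)"
    by algebra
  then show "e^3 = 0" using h h2 by simp
qed

theorem lemma13:
  fixes U :: "'a::{field,finite} poly set"
    and n :: nat
    and A B :: "'a \<Rightarrow> 'a"
  assumes q: "card (UNIV :: 'a set) = 2 ^ n"
    and q2: "card (UNIV :: 'a set) > 2"
    and deg: "\<forall>g\<in>U. degree g \<le> 2"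
    and inter: "intersecting U"
    and lin: "\<forall>t\<in>DomU U. \<forall>b\<in>Bset U t. fU U b (b + t) = A t * b + B t"
    and trA: "\<forall>t\<in>DomU U. tr2 n (A t) = 0"
  shows "\<exists>\<alpha> \<beta>. \<forall>t\<in>DomU U. A t = \<alpha> ^ (card (UNIV :: 'a set) div 2) + \<alpha> \<and> B t = \<alpha> * t + \<beta>"
proof -
  have n2: "n \<ge> 2"
  proof (rule ccontr)
    assume "\<not> n \<ge> 2"
    then have "n = 0 \<or> n = 1" by auto
    then show False using q q2 by auto
  qed
  have c2: "(2::'a) = 0" by (rule char2[OF q])
  have frob: "\<And>y::'a. y^(2^n) = y" using pow_card_same[where 'a='a] q by metis
  have negx: "\<And>x::'a. - x = x" by (rule c2_neg[OF c2])
  have addself: "\<And>x::'a. x + x = 0" by (rule c2_add_self[OF c2])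
  define Dm where "Dm = DomU U"
  define sq where "sq = (\<lambda>x::'a. x^(2^(n-1)))"
  have pn: "(2::nat)^n = 2^(n-1) * 2" using n2 by (metis Suc_diff_1 less_le_trans pos2 power_Suc2)
  have sq_sq: "(sq x)^2 = x" for x
    unfolding sq_def by (metis frob pn power_mult)
  have sq_of_sq: "sq (x^2) = x" for x
    unfolding sq_def by (metis frob pn power_mult mult.commute)
  have sq_add: "sq (x + y) = sq x + sq y" for x y
    unfolding sq_def by (rule c2_pow_add[OF c2])
  have sq_mult: "sq (x * y) = sq x * sq y" for x y
    unfolding sq_def by (simp add: power_mult_distrib)
  have sq_one: "sq 1 = 1" unfolding sq_def by simp
  have qdiv: "card (UNIV :: 'a set) div 2 = 2^(n-1)" using q pn by simp
  have tr0: "tr2 n (0::'a) = 0" unfolding tr2_def by (simp add: power_0_left)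
  have mem: "[:fU U b (b+t), b, b+t:] \<in> U" if "b \<in> Bset U t" for t b
  proof -
    have "(b, b+t) \<in> Dset U" using that by (simp add: Bset_def)
    then obtain a where a: "[:a, b, b+t:] \<in> U" unfolding Dset_def by blast
    have uniq: "a' = a" if "[:a', b, b+t:] \<in> U" for a'
    proof -
      have "\<exists>x. poly [:a', b, b+t:] x = poly [:a, b, b+t:] x"
        using inter that a unfolding intersecting_def by blast
      then obtain x where "poly [:a', b, b+t:] x = poly [:a, b, b+t:] x" by blast
      then show ?thesis by simp
    qed
    have "fU U b (b+t) = a" unfolding fU_def using a uniq by (rule the_equality)
    then show ?thesis using a by simp
  qed
  have memL: "[:A t * b + B t, b, b+t:] \<in> U" if "t \<in> Dm" "b \<in> Bset U t" for t b
    using mem[OF that(2)] lin that unfolding Dm_def by metis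
  have cross: "tr2 n (((A t*b + B t) - (A s*b' + B s)) * ((b+t) - (b'+s)) / (b - b')^2) = 0"
    if hyp: "t \<in> Dm" "s \<in> Dm" "b \<in> Bset U t" "b' \<in> Bset U s" "b - b' \<noteq> 0" "(b + t) - (b' + s) \<noteq> 0"
    for t s b b'
  proof -
    have "\<exists>x. poly [:A t*b+B t, b, b+t:] x = poly [:A s*b'+B s, b', b'+s:] x"
      using inter memL[OF hyp(1,3)] memL[OF hyp(2,4)] unfolding intersecting_def by blast
    then obtain x where "poly [:A t*b+B t, b, b+t:] x = poly [:A s*b'+B s, b', b'+s:] x" by blast
    then have "((A t*b + B t) - (A s*b' + B s)) + (b - b')*x + ((b+t) - (b'+s))*x^2 = 0"
      by (simp add: algebra_simps power2_eq_square)
    then show ?thesis by (rule keyQ[OF c2 frob hyp(5,6)])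
  qed
  have cardB: "real (card (Bset U t)) \<ge> real (card (UNIV::'a set)) - sqrt (real (card (UNIV::'a set)))/2"
    if "t \<in> Dm" for t
    using that by (simp add: Dm_def DomU_def)
  define S where "S = (\<lambda>t s d. {b \<in> Bset U t. b - d \<in> Bset U s})"
  have cardS: "real (card (S t s d)) \<ge> real (card (UNIV::'a set)) - sqrt (real (card (UNIV::'a set)))"
    if "t \<in> Dm" "s \<in> Dm" for t s d
  proof -
    have SE: "S t s d = Bset U t \<inter> (\<lambda>b. b + d) ` Bset U s"
      unfolding S_def by force
    have ci: "card ((\<lambda>b. b + d) ` Bset U s) = card (Bset U s)"
      by (rule card_image) (simp add: inj_on_def)
    have "card (Bset U t) + card ((\<lambda>b. b + d) ` Bset U s)
        = card (Bset U t \<union> (\<lambda>b. b + d) ` Bset U s) + card (S t s d)"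
      unfolding SE by (rule card_Un_Int) auto
    moreover have "card (Bset U t \<union> (\<lambda>b. b + d) ` Bset U s) \<le> card (UNIV::'a set)"
      by (rule card_mono) auto
    ultimately have "card (Bset U t) + card (Bset U s) \<le> card (UNIV::'a set) + card (S t s d)"
      using ci by linarith
    then have "real (card (Bset U t)) + real (card (Bset U s)) \<le> real (card (UNIV::'a set)) + real (card (S t s d))"
      by (metis of_nat_add of_nat_le_iff)
    then show ?thesis using cardB[OF that(1)] cardB[OF that(2)] by linarith
  qed
  have crossS: "tr2 n (((A t - A s)*(d + (t-s))/d^2) * b + ((A s * d + (B t - B s)) * (d + (t-s))/d^2)) = 0"
    if "t \<in> Dm" "s \<in> Dm" "d \<noteq> 0" "d + (t - s) \<noteq> 0" "b \<in> S t s d" for t s d b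
  proof -
    have b: "b \<in> Bset U t" "b - d \<in> Bset U s" using that(5) unfolding S_def by auto
    have e1: "b - (b - d) \<noteq> 0" using that(3) by simp
    have eqw: "(b+t) - ((b - d)+s) = d + (t - s)" by (simp add: algebra_simps)
    have e2: "(b+t) - ((b - d)+s) \<noteq> 0" unfolding eqw by (rule that(4))
    have "tr2 n (((A t*b + B t) - (A s*(b - d) + B s)) * ((b+t) - ((b - d)+s)) / (b - (b - d))^2) = 0"
      by (rule cross[OF that(1,2) b e1 e2])
    moreover have "((A t*b + B t) - (A s*(b - d) + B s)) * ((b+t) - ((b - d)+s)) / (b - (b - d))^2
       = ((A t - A s)*(d + (t-s))/d^2) * b + ((A s * d + (B t - B s)) * (d + (t-s))/d^2)"
      using that(3) by (simp add: field_simps)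
    ultimately show ?thesis by simp
  qed
  have trcard: "card {b::'a. tr2 n (\<mu>*b + \<kappa>) = 0} \<le> 2^(n-1)" if "\<mu> \<noteq> 0" for \<mu> \<kappa>
  proof -
    have "card {b::'a. tr2 n (\<mu>*b + \<kappa>) = 0} \<le> card {y::'a. tr2 n y = 0}"
    proof (rule card_inj_on_le[where f="\<lambda>b. \<mu>*b + \<kappa>"])
      show "inj_on (\<lambda>b. \<mu> * b + \<kappa>) {b. tr2 n (\<mu> * b + \<kappa>) = 0}"
      proof (rule inj_onI)
        fix x y assume "\<mu> * x + \<kappa> = \<mu> * y + \<kappa>"
        then have "\<mu> * x = \<mu> * y" by simp
        then show "x = y" using that by simp
      qed
      show "(\<lambda>b. \<mu>*b + \<kappa>) ` {b. tr2 n (\<mu>*b + \<kappa>) = 0} \<subseteq> {y. tr2 n y = 0}" by blast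
      show "finite {y::'a. tr2 n y = 0}" by simp
    qed
    also have "\<dots> \<le> 2^(n-1)" by (rule tr_zero_card) (use n2 in auto)
    finally show ?thesis .
  qed
  have dpe: "d + e \<noteq> 0 \<longleftrightarrow> d \<noteq> e" for d e :: 'a
    using add_eq_0_iff[of d e] negx[of d] by auto
  have Aconst: "\<forall>t\<in>Dm. \<forall>s\<in>Dm. A t = A s"
  proof (intro ballI)
    fix t s assume t: "t \<in> Dm" and s: "s \<in> Dm"
    show "A t = A s"
    proof (rule ccontr)
      assume ne: "A t \<noteq> A s"
      define e where "e = t - s"
      have tsne: "t \<noteq> s" using ne by auto
      have e0: "e \<noteq> 0" using tsne by (simp add: e_def)
      have ex3: "\<exists>d::'a. d \<noteq> 0 \<and> d \<noteq> e"
      proof (rule ccontr)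
        assume "\<not> (\<exists>d::'a. d \<noteq> 0 \<and> d \<noteq> e)"
        then have "UNIV \<subseteq> {0, e}" by auto
        then have "card (UNIV::'a set) \<le> card {0,e}" by (intro card_mono) auto
        also have "\<dots> \<le> 2" by (simp add: card_insert_if)
        finally show False using q2 by simp
      qed
      obtain d1 where d1: "d1 \<noteq> 0" "d1 \<noteq> e" using ex3 by blast
      have crossE: "tr2 n (((A t - A s)*(d + e)/d^2) * b + ((A s * d + (B t - B s)) * (d + e)/d^2)) = 0"
        if "d \<noteq> 0" "d \<noteq> e" "b \<in> S t s d" for d b
        using crossS[OF t s that(1) _ that(3)] dpe[of d e] that(2) unfolding e_def by simp
      show False
      proof (cases "n = 2")
        case False
        then have n3: "n \<ge> 3" using n2 by simp
        define \<mu> where "\<mu> = (A t - A s)*(d1 + e)/d1^2"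
        define \<kappa> where "\<kappa> = (A s * d1 + (B t - B s)) * (d1 + e)/d1^2"
        have mu0: "\<mu> \<noteq> 0" using ne d1 dpe[of d1 e] unfolding \<mu>_def by auto
        have "S t s d1 \<subseteq> {b. tr2 n (\<mu>*b+\<kappa>) = 0}"
          using crossE[OF d1] unfolding \<mu>_def \<kappa>_def by blast
        then have "card (S t s d1) \<le> card {b. tr2 n (\<mu>*b+\<kappa>) = 0}" by (intro card_mono) auto
        also have "\<dots> \<le> 2^(n-1)" by (rule trcard[OF mu0])
        finally have c1: "real (card (S t s d1)) \<le> real (2^(n-1))" by linarith
        define Q where "Q = real (card (UNIV::'a set))"
        have Qh: "real ((2::nat)^(n-1)) = Q/2" unfolding Q_def using q pn by simp
        have Q8: "Q \<ge> 8"
        proof -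
          have "(2::nat)^3 \<le> 2^n" by (rule power_increasing[OF n3]) auto
          then have "real ((2::nat)^3) \<le> real ((2::nat)^n)" by (simp only: of_nat_le_iff)
          then show ?thesis unfolding Q_def using q by simp
        qed
        have "Q - sqrt Q \<le> Q/2" using c1 cardS[OF t s, of d1] Qh unfolding Q_def by linarith
        then have hq: "Q/2 \<le> sqrt Q" by linarith
        have "(Q/2)^2 \<le> (sqrt Q)^2" by (rule power_mono[OF hq]) (use Q8 in auto)
        also have "(sqrt Q)^2 = Q" using Q8 by simp
        finally have "Q*Q \<le> 4*Q" by (simp add: power2_eq_square field_simps)
        then have "Q \<le> 4" using Q8 mult_le_cancel_right_pos[of Q Q 4] by simp
        then show False using Q8 by simp
      next
        case True
        have q4: "card (UNIV::'a set) = 4" using q True by simp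
        have tr4: "tr2 n y = y + y^2" for y :: 'a
          unfolding tr2_def True by (simp add: numeral_2_eq_2)
        have A01: "A x = 0 \<or> A x = 1" if "x \<in> Dm" for x
        proof -
          have "A x + (A x)^2 = 0" using trA that tr4 unfolding Dm_def by metis
          then have "A x * (1 + A x) = 0" by (simp add: algebra_simps power2_eq_square)
          then have "A x = 0 \<or> 1 + A x = 0" by simp
          then show ?thesis
          proof
            assume "1 + A x = 0"
            then have "A x = - 1" by (simp add: eq_neg_iff_add_eq_0 add.commute)
            then show ?thesis using negx[of 1] by simp
          qed simp
        qed
        have lam: "A t - A s = 1"
          using A01[OF t] A01[OF s] ne negx[of 1] by auto
        have s4: "sqrt (4::real) = 2" by (rule real_sqrt_unique) auto
        have miss: "\<exists>p. \<forall>b. b \<noteq> p \<longrightarrow> b \<in> Bset U x" if "x \<in> Dm" for x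
        proof -
          have "real (card (Bset U x)) \<ge> 3" using cardB[OF that] q4 s4 by simp
          then have c3: "card (Bset U x) \<ge> 3" by simp
          have "card (UNIV - Bset U x) = card (UNIV::'a set) - card (Bset U x)"
            by (rule card_Diff_subset) auto
          then have "card (UNIV - Bset U x) \<le> Suc 0" using c3 q4 by simp
          then have all: "\<forall>a\<in>UNIV - Bset U x. \<forall>b\<in>UNIV - Bset U x. a = b"
            using card_le_Suc0_iff_eq[of "UNIV - Bset U x"] by simp
          show ?thesis
          proof (cases "UNIV - Bset U x = {}")
            case True then show ?thesis by auto
          next
            case False
            then obtain p where "p \<in> UNIV - Bset U x" by blast
            then show ?thesis using all by blast
          qed
        qed
        obtain p where p: "\<forall>b. b \<noteq> p \<longrightarrow> b \<in> Bset U t" using miss[OF t] by blast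
        obtain r where r: "\<forall>b. b \<noteq> r \<longrightarrow> b \<in> Bset U s" using miss[OF s] by blast
        have key4: "p + r + d + d^2/(d+e) = 0" if dd: "d \<noteq> 0" "d \<noteq> e" for d
        proof -
          have w: "d + e \<noteq> 0" using dpe[of d e] dd by simp
          define \<mu> where "\<mu> = (d + e)/d^2"
          define \<kappa> where "\<kappa> = (A s * d + (B t - B s)) * (d + e)/d^2"
          have mu0: "\<mu> \<noteq> 0" using dd w unfolding \<mu>_def by simp
          define x0 where "x0 = \<kappa>/\<mu>"
          define h where "h = 1/\<mu>"
          have hval: "h = d^2/(d+e)" unfolding h_def \<mu>_def by simp
          have inS: "b = x0 \<or> b = x0 + h" if bS: "b \<in> S t s d" for b
          proof -
            have "tr2 n (\<mu>*b + \<kappa>) = 0" using crossE[OF dd bS] lam unfolding \<mu>_def \<kappa>_def by simp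
            then have "(\<mu>*b + \<kappa>) * (1 + (\<mu>*b + \<kappa>)) = 0" unfolding tr4 by (simp add: algebra_simps power2_eq_square)
            then have "\<mu>*b + \<kappa> = 0 \<or> 1 + (\<mu>*b + \<kappa>) = 0" by simp
            then show ?thesis
            proof
              assume "\<mu>*b + \<kappa> = 0"
              then have "\<mu>*b = - \<kappa>" by (simp add: eq_neg_iff_add_eq_0)
              then have "b = - \<kappa> / \<mu>" using mu0 by (simp add: field_simps)
              then show ?thesis using negx[of \<kappa>] unfolding x0_def by simp
            next
              assume "1 + (\<mu>*b + \<kappa>) = 0"
              then have "\<mu>*b = - 1 - \<kappa>" by (simp add: eq_neg_iff_add_eq_0 algebra_simps)
              then have "b = (- 1 - \<kappa>) / \<mu>" using mu0 by (simp add: field_simps)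
              also have "- 1 - \<kappa> = 1 + \<kappa>" using negx[of 1] negx[of \<kappa>] by (metis diff_conv_add_uminus)
              finally have "b = \<kappa>/\<mu> + 1/\<mu>" by (simp add: add_divide_distrib add.commute)
              then show ?thesis unfolding x0_def h_def by simp
            qed
          qed
          have cover: "UNIV = {x0, x0 + h, p, r + d}"
          proof (rule set_eqI, rule iffI)
            fix b :: 'a
            show "b \<in> {x0, x0 + h, p, r + d}"
            proof (cases "b = p \<or> b = r + d")
              case True then show ?thesis by auto
            next
              case False
              then have "b - d \<noteq> r" by (auto simp: diff_eq_eq)
              then have "b \<in> Bset U t" "b - d \<in> Bset U s" using p r False by auto
              then have "b \<in> S t s d" unfolding S_def by simp
              then show ?thesis using inS by auto
            qed
          qed simp
          have c4: "card {x0, x0 + h, p, r + d} = 4" by (subst cover[symmetric]) (rule q4)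
          have "x0 + (x0 + h) + p + (r + d) = (\<Sum>x\<in>{x0, x0 + h, p, r + d}. x)"
            by (rule sum4[OF c4, symmetric])
          also have "\<dots> = 0" unfolding cover[symmetric] by (rule sum_univ_zero[OF q2])
          finally have "x0 + (x0 + h) + p + (r + d) = 0" .
          then have "(x0 + x0) + h + p + r + d = 0" by (simp add: algebra_simps)
          then have "h + p + r + d = 0" using addself[of x0] by simp
          then show ?thesis using hval by (simp add: algebra_simps)
        qed
        define d2 where "d2 = d1 + e"
        have d2: "d2 \<noteq> 0" "d2 \<noteq> e" using d1 dpe[of d1 e] unfolding d2_def by auto
        have d2e: "d2 + e = d1" unfolding d2_def using addself[of e] by (simp add: add.assoc)
        have k1: "p + r + d1 + d1^2/d2 = 0" using key4[OF d1] unfolding d2_def .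
        have k2: "p + r + d2 + d2^2/d1 = 0" using key4[OF d2] d2e by simp
        have "d1 + d1^2/d2 = d2 + d2^2/d1" using k1 k2 by (metis add.assoc add_left_cancel)
        then have "d1^2*d2 + d1^3 = d1*d2^2 + d2^3"
          using d1(1) d2(1) by (simp add: field_simps power2_eq_square power3_eq_cube)
        then have "d1^2*(d1+e) + d1^3 = d1*(d1+e)^2 + (d1+e)^3" unfolding d2_def .
        then have "e^3 = 0" by (rule cube_c2[OF c2])
        then show False using e0 by simp
      qed
    qed
  qed
  have Qpos: "sqrt (real (card (UNIV::'a set))) < real (card (UNIV::'a set))"
  proof -
    define Q where "Q = real (card (UNIV::'a set))"
    have Q4: "Q \<ge> 4"
    proof -
      have "(2::nat)^2 \<le> 2^n" by (rule power_increasing[OF n2]) auto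
      then have "real ((2::nat)^2) \<le> real ((2::nat)^n)" by (simp only: of_nat_le_iff)
      then show ?thesis unfolding Q_def using q by simp
    qed
    have s4: "sqrt (4::real) = 2" by (rule real_sqrt_unique) auto
    have "sqrt 4 \<le> sqrt Q" using Q4 by (simp only: real_sqrt_le_iff)
    then have s2: "sqrt Q \<ge> 2" using s4 by simp
    have "sqrt Q * sqrt Q = Q" using Q4 by simp
    moreover have "2 * sqrt Q \<le> sqrt Q * sqrt Q" using s2 Q4 by (intro mult_right_mono) auto
    ultimately have "Q \<ge> 2 * sqrt Q" by simp
    then show ?thesis using s2 unfolding Q_def by linarith
  qed
  show ?thesis
  proof (cases "Dm = {}")
    case True then show ?thesis unfolding Dm_def by auto
  next
    case False
    then obtain t0 where t0: "t0 \<in> Dm" by blast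
    define A0 where "A0 = A t0"
    have AA: "A t = A0" if "t \<in> Dm" for t using Aconst that t0 unfolding A0_def by blast
    have trA0: "tr2 n A0 = 0" using trA t0 unfolding A0_def Dm_def by blast
    obtain g where g: "A0 = g^2 + g" using surjQ[OF q _ c2 frob trA0] n2 by auto
    define \<alpha> where "\<alpha> = g^2"
    have sqa: "sq \<alpha> = g" unfolding \<alpha>_def by (rule sq_of_sq)
    have Aal: "A0 = sq \<alpha> + \<alpha>" using g sqa \<alpha>_def by (simp add: add.commute)
    have Lam: "A0*(t-s) + (B t - B s) + sq((B t - B s)*(t-s)) = 0" if ts: "t \<in> Dm" "s \<in> Dm" "t \<noteq> s" for t s
    proof (rule ccontr)
      define e where "e = t - s"
      define c where "c = B t - B s"
      define \<Lambda> where "\<Lambda> = A0*e + c + sq(c*e)"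
      assume "A0*(t-s) + (B t - B s) + sq((B t - B s)*(t-s)) \<noteq> 0"
      then have L0: "\<Lambda> \<noteq> 0" unfolding \<Lambda>_def e_def c_def .
      have e0: "e \<noteq> 0" using ts(3) unfolding e_def by simp
      have trd: "tr2 n (\<Lambda> * u) = 0" if u: "u \<noteq> 0" "u \<noteq> 1/e" for u
      proof -
        define d where "d = 1/u"
        have d0: "d \<noteq> 0" using u unfolding d_def by simp
        have de: "d \<noteq> e"
        proof
          assume "d = e"
          then have "1/e = 1/(1/u)" unfolding d_def by simp
          then have "1/e = u" by simp
          with u(2) show False by simp
        qed
        have "real (card (S t s d)) > 0" using cardS[OF ts(1,2), of d] Qpos by linarith
        then have "S t s d \<noteq> {}" by (metis card.empty of_nat_0 less_irrefl)
        then obtain b where b: "b \<in> S t s d" by blast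
        have w: "d + (t - s) \<noteq> 0" using dpe[of d e] de unfolding e_def by simp
        have "tr2 n (((A t - A s)*(d + (t-s))/d^2) * b + ((A s * d + (B t - B s)) * (d + (t-s))/d^2)) = 0"
          by (rule crossS[OF ts(1,2) d0 w b])
        then have k: "tr2 n ((A0 * d + c) * (d + e)/d^2) = 0"
          using AA[OF ts(1)] AA[OF ts(2)] unfolding e_def c_def by simp
        have sqce: "(sq(c*e)/d)^2 = c*e/d^2" by (simp add: power_divide sq_sq)
        have "(A0 * d + c) * (d + e)/d^2 = A0 + ((A0*e + c)/d + (sq(c*e)/d)^2)"
          unfolding sqce using d0 by (simp add: field_simps power2_eq_square)
        then have "0 = tr2 n A0 + (tr2 n ((A0*e + c)/d) + tr2 n ((sq(c*e)/d)^2))"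
          using k tr_add[OF c2] by simp
        also have "tr2 n ((sq(c*e)/d)^2) = tr2 n (sq(c*e)/d)" by (rule tr_sq[OF frob])
        finally have "tr2 n ((A0*e + c)/d + sq(c*e)/d) = 0" using trA0 tr_add[OF c2] by simp
        moreover have "(A0*e + c)/d + sq(c*e)/d = \<Lambda> * u"
          unfolding \<Lambda>_def d_def using u by (simp add: field_simps)
        ultimately show ?thesis by simp
      qed
      have sub: "UNIV - {1/e} \<subseteq> {u. tr2 n (\<Lambda>*u + 0) = 0}"
      proof
        fix u assume "u \<in> UNIV - {1/e}"
        then show "u \<in> {u. tr2 n (\<Lambda>*u + 0) = 0}"
          using trd[of u] tr0 by (cases "u = 0") auto
      qed
      have "card (UNIV - {1/e}) = card (UNIV::'a set) - 1" by (simp add: card_Diff_singleton)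
      moreover have "card (UNIV - {1/e}) \<le> card {u. tr2 n (\<Lambda>*u + 0) = 0}"
        using sub by (intro card_mono) auto
      moreover have "card {u. tr2 n (\<Lambda>*u + 0) = 0} \<le> 2^(n-1)" by (rule trcard[OF L0])
      moreover have "(2::nat)^(n-1) \<ge> 2"
        using power_increasing[of 1 "n-1" "2::nat"] n2 by simp
      ultimately show False using q pn by simp
    qed
    have gam: "B t - \<alpha>*t = B s - \<alpha>*s \<or> (B t - \<alpha>*t) - t = (B s - \<alpha>*s) - s"
      if ts: "t \<in> Dm" "s \<in> Dm" "t \<noteq> s" for t s
    proof -
      define e where "e = t - s"
      define c where "c = B t - B s"
      have e0: "e \<noteq> 0" using ts(3) unfolding e_def by simp
      define \<gamma> where "\<gamma> = c/e"
      have c_eq: "c = \<gamma>*e" unfolding \<gamma>_def using e0 by simp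
      have sqee: "sq (e*e) = e" using sq_of_sq[of e] by (simp add: power2_eq_square)
      have sqce: "sq(c*e) = sq \<gamma> * e" unfolding c_eq using sq_mult sqee by (metis mult.assoc)
      have L: "A0*e + c + sq(c*e) = 0" using Lam[OF ts] unfolding e_def c_def .
      then have "e*(A0 + (\<gamma> + sq \<gamma>)) = 0" using c_eq sqce by (simp add: algebra_simps)
      then have "A0 + (\<gamma> + sq \<gamma>) = 0" using e0 by simp
      then have "\<gamma> + sq \<gamma> = - A0" by (simp add: add_eq_0_iff)
      then have A0g: "\<gamma> + sq \<gamma> = A0" using negx[of A0] by simp
      define \<delta> where "\<delta> = \<gamma> + \<alpha>"
      have "\<delta> + sq \<delta> = (\<gamma> + sq \<gamma>) + (sq \<alpha> + \<alpha>)" unfolding \<delta>_def sq_add by (simp add: algebra_simps)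
      also have "\<dots> = A0 + A0" using A0g Aal by simp
      also have "\<dots> = 0" by (rule addself)
      finally have "sq \<delta> = - \<delta>" by (simp add: add_eq_0_iff)
      then have sd: "sq \<delta> = \<delta>" using negx[of \<delta>] by simp
      have "\<delta>^2 = \<delta>" using sq_sq[of \<delta>] sd by simp
      then have "\<delta> * (\<delta> - 1) = 0" by (simp add: algebra_simps power2_eq_square)
      then have d01: "\<delta> = 0 \<or> \<delta> = 1" by simp
      have "\<gamma> = \<delta> - \<alpha>" unfolding \<delta>_def by simp
      also have "- \<alpha> = \<alpha>" by (rule negx)
      then have "\<delta> - \<alpha> = \<delta> + \<alpha>" by (metis diff_conv_add_uminus)
      finally have ga: "\<gamma> = \<delta> + \<alpha>" .
      have "(B t - \<alpha>*t) - (B s - \<alpha>*s) = c - \<alpha>*e" unfolding c_def e_def by (simp add: algebra_simps)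
      also have "\<dots> = \<delta> * e" unfolding c_eq ga by (simp add: algebra_simps)
      finally have diff: "(B t - \<alpha>*t) - (B s - \<alpha>*s) = \<delta> * e" .
      from d01 show ?thesis
      proof
        assume "\<delta> = 0" then show ?thesis using diff by simp
      next
        assume "\<delta> = 1" then have "(B t - \<alpha>*t) - (B s - \<alpha>*s) = t - s" using diff unfolding e_def by simp
        then show ?thesis by (simp add: algebra_simps)
      qed
    qed
    define \<beta> where "\<beta> = (\<lambda>t. B t - \<alpha>*t)"
    have Apow: "A t = \<alpha> ^ (card (UNIV :: 'a set) div 2) + \<alpha>" if "t \<in> Dm" for t
      using AA[OF that] Aal unfolding qdiv sq_def by simp
    show ?thesis
    proof (cases "\<forall>t\<in>Dm. \<beta> t = \<beta> t0")
      case True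
      show ?thesis
      proof (intro exI ballI conjI)
        fix t assume t: "t \<in> DomU U"
        then show "A t = \<alpha> ^ (card (UNIV :: 'a set) div 2) + \<alpha>" using Apow unfolding Dm_def by simp
        have "B t - \<alpha>*t = \<beta> t0" using True t unfolding Dm_def \<beta>_def by auto
        then show "B t = \<alpha> * t + \<beta> t0" by (simp add: algebra_simps)
      qed
    next
      case False
      then obtain t1 where t1: "t1 \<in> Dm" "\<beta> t1 \<noteq> \<beta> t0" by blast
      have t10: "t1 \<noteq> t0" using t1 by auto
      have g10: "\<beta> t1 - t1 = \<beta> t0 - t0" using gam[OF t1(1) t0 t10] t1(2) unfolding \<beta>_def by auto
      have all1: "\<beta> t - t = \<beta> t1 - t1" if tD: "t \<in> Dm" for t
      proof (cases "t = t1")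
        case True thus ?thesis by simp
      next
        case ne1: False
        from gam[OF tD t1(1) ne1] have "\<beta> t = \<beta> t1 \<or> \<beta> t - t = \<beta> t1 - t1" unfolding \<beta>_def .
        then show ?thesis
        proof
          assume bt: "\<beta> t = \<beta> t1"
          have "t \<noteq> t0" using bt t1(2) by auto
          from gam[OF tD t0 this] have "\<beta> t = \<beta> t0 \<or> \<beta> t - t = \<beta> t0 - t0" unfolding \<beta>_def .
          then show ?thesis using bt t1(2) g10 by auto
        qed
      qed
      have sqa1: "(\<alpha> + 1) ^ (card (UNIV :: 'a set) div 2) + (\<alpha> + 1) = sq \<alpha> + \<alpha>"
      proof -
        have "(\<alpha> + 1) ^ (card (UNIV :: 'a set) div 2) = sq \<alpha> + 1"
          unfolding qdiv using sq_add[of \<alpha> 1] sq_one unfolding sq_def by simp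
        then have "(\<alpha> + 1) ^ (card (UNIV :: 'a set) div 2) + (\<alpha> + 1) = sq \<alpha> + \<alpha> + (1 + 1)"
          by (simp add: algebra_simps)
        then show ?thesis using addself[of 1] by simp
      qed
      show ?thesis
      proof (intro exI ballI conjI)
        fix t assume t: "t \<in> DomU U"
        then show "A t = (\<alpha> + 1) ^ (card (UNIV :: 'a set) div 2) + (\<alpha> + 1)"
          using AA Aal sqa1 unfolding Dm_def by simp
        have "\<beta> t - t = \<beta> t1 - t1" using all1 t unfolding Dm_def by simp
        then show "B t = (\<alpha> + 1) * t + (\<beta> t1 - t1)" unfolding \<beta>_def by (simp add: algebra_simps)
      qed
    qed
  qed
qed

end
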